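(* Let $a,b>0$ with $a\neq2b$ and $a\neq b$, $\eta\in(0,1]$, $T>0$ and $0<\tau\le T$. For two photons both in the double-exponential state $(a,b)$ in the double-click protocol with detection time window $T$ and coincidence time window $\tau$, the Hong-Ou-Mandel visibility $V(T,\tau)$ satisfies $$V(T,\tau)\left(\frac{p_{\mathrm{det}}(T)}{\eta}\right)^2p_{\mathrm{ph\text{-}ph}}(T,\tau)=\frac{a}{a+2b}(1-e^{-2b\tau})+\frac{2ab^2}{(a-2b)^2(a-b)}\big(1-e^{2(a-b)\tau}\big)e^{-2aT}+\frac{a^2}{(a-2b)^2}(1-e^{2b\tau})e^{-4bT}-\frac{16ab^2}{(a-2b)^2(a+2b)}(1-e^{a\tau})e^{-(a+2b)T}.$$
   Context: $\Theta$ is the Heaviside step function. The double-exponential photon state $(a,b)$ is the mixture over emission times $t_0$ with density $p_{\mathrm{em}}(t_0)=ae^{-at_0}\Theta(t_0)$ of pure photons with real temporal wave function $\psi_{t_0}(t)=\sqrt{2b}\,e^{-b(t-t_0)}\Theta(t-t_0)$. For detectors of efficiency $\eta$: $p(t)=\eta\int_0^\infty p_{\mathrm{em}}(t_0)|\psi_{t_0}(t)|^2dt_0$ is the detection-time density, $p_{\mathrm{det}}(T)=\int_0^Tp(t)\,dt$, $p_T(t)=\Theta(t)\Theta(T-t)p(t)/p_{\mathrm{det}}(T)$, and $p_{\mathrm{ph\text{-}ph}}(T,\tau)=\iint_{|t_1-t_2|\le\tau}p_T(t_1)p_T(t_2)\,dt_1dt_2$. A success requires both detections in $[0,T]$ and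 at most $\tau$ apart. The visibility is $V(T,\tau)=1-P_{\mathrm{same}}/P_{\mathrm{diff}}$, where $P_{\mathrm{diff}}=\frac12p_{\mathrm{det}}(T)^2p_{\mathrm{ph\text{-}ph}}(T,\tau)$ is the probability that two photons in different (non-interfering) modes are both detected, at different detectors, under these window conditions, and $$P_{\mathrm{same}}=\frac{\eta^2}{4}\int_0^\infty\!\!\int_0^\infty\!\!\iint_{[0,T]^2,\,|t_1'-t_2'|\le\tau}p_{\mathrm{em}}(t_1)p_{\mathrm{em}}(t_2)\big|\psi_{t_1}(t_1')\psi_{t_2}(t_2')-\psi_{t_1}(t_2')\psi_{t_2}(t_1')\big|^2dt_1'dt_2'\,dt_1dt_2$$ is the corresponding probability for two photons in the same mode interfering on a 50:50 beam splitter. *)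

theory Defs
  imports "HOL-Analysis.Analysis"
begin

text \<open>Double-exponential photon state (a,b); Heaviside step encoded by if-then-else
  (Theta(0) = 1 convention; irrelevant for integrals).\<close>

definition p_em :: "real \<Rightarrow> real \<Rightarrow> real" where
  "p_em a t0 = (if t0 \<ge> 0 then a * exp (- a * t0) else 0)"

definition psi :: "real \<Rightarrow> real \<Rightarrow> real \<Rightarrow> real" where
  "psi b t0 t = (if t \<ge> t0 then sqrt (2 * b) * exp (- b * (t - t0)) else 0)"

definition p_dens :: "real \<Rightarrow> real \<Rightarrow> real \<Rightarrow> real \<Rightarrow> real" where
  "p_dens \<eta> a b t = \<eta> * (\<integral>t0\<in>{0..}. p_em a t0 * (psi b t0 t)\<^sup>2 \<partial>lborel)"

definition p_det :: "real \<Rightarrow> real \<Rightarrow> real \<Rightarrow> real \<Rightarrow> real" where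
  "p_det \<eta> a b T = (\<integral>t\<in>{0..T}. p_dens \<eta> a b t \<partial>lborel)"

definition p_T :: "real \<Rightarrow> real \<Rightarrow> real \<Rightarrow> real \<Rightarrow> real \<Rightarrow> real" where
  "p_T \<eta> a b T t = (if 0 \<le> t \<and> t \<le> T then p_dens \<eta> a b t / p_det \<eta> a b T else 0)"

definition p_phph :: "real \<Rightarrow> real \<Rightarrow> real \<Rightarrow> real \<Rightarrow> real \<Rightarrow> real" where
  "p_phph \<eta> a b T \<tau> =
     (\<integral>x\<in>{x::real\<times>real. \<bar>fst x - snd x\<bar> \<le> \<tau>}.
        p_T \<eta> a b T (fst x) * p_T \<eta> a b T (snd x) \<partial>lborel)"

definition P_diff :: "real \<Rightarrow> real \<Rightarrow> real \<Rightarrow> real \<Rightarrow> real \<Rightarrow> real" where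
  "P_diff \<eta> a b T \<tau> = 1/2 * (p_det \<eta> a b T)\<^sup>2 * p_phph \<eta> a b T \<tau>"

definition P_same :: "real \<Rightarrow> real \<Rightarrow> real \<Rightarrow> real \<Rightarrow> real \<Rightarrow> real" where
  "P_same \<eta> a b T \<tau> = \<eta>\<^sup>2 / 4 *
     (\<integral>e\<in>{0..}\<times>{0..}.
        (\<integral>s\<in>{s::real\<times>real. 0 \<le> fst s \<and> fst s \<le> T \<and> 0 \<le> snd s \<and> snd s \<le> T
                              \<and> \<bar>fst s - snd s\<bar> \<le> \<tau>}.
           p_em a (fst e) * p_em a (snd e) *
           (psi b (fst e) (fst s) * psi b (snd e) (snd s)
            - psi b (fst e) (snd s) * psi b (snd e) (fst s))\<^sup>2 \<partial>lborel) \<partial>lborel)"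

definition visibility :: "real \<Rightarrow> real \<Rightarrow> real \<Rightarrow> real \<Rightarrow> real \<Rightarrow> real" where
  "visibility \<eta> a b T \<tau> = 1 - P_same \<eta> a b T \<tau> / P_diff \<eta> a b T \<tau>"

end

theory Submission
  imports Defs
begin

lemma hi_exp:
  fixes lam l u :: real
  assumes "lam \<noteq> 0" "l \<le> u"
  shows "((\<lambda>z. exp (lam*z)) has_integral (exp(lam*u) - exp(lam*l))/lam) {l..u}"
proof -
  have "((\<lambda>z. exp (lam*z)) has_integral (exp(lam*u)/lam - exp(lam*l)/lam)) {l..u}"
    using assms
    by (intro fundamental_theorem_of_calculus)
       (auto intro!: derivative_eq_intros simp flip: has_real_derivative_iff_has_vector_derivative)
  then show ?thesis by (simp add: diff_divide_distrib)
qed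

lemma lint_Icc:
  fixes f :: "real \<Rightarrow> real"
  assumes "continuous_on {l..u} f"
  shows "(\<integral>t\<in>{l..u}. f t \<partial>lborel) = integral {l..u} f"
  by (rule set_borel_integral_eq_integral(2))
     (use borel_integrable_compact[OF compact_Icc assms] in \<open>simp add: set_integrable_def\<close>)

lemma pem_meas[measurable]: "p_em a \<in> borel_measurable borel"
  unfolding p_em_def by measurable

lemma psi_meas[measurable]:
  assumes [measurable]: "f \<in> borel_measurable M" "g \<in> borel_measurable M"
  shows "(\<lambda>x. psi b (f x) (g x)) \<in> borel_measurable M"
  unfolding psi_def by measurable

lemma exp3:
  fixes a b t x y :: real
  shows "exp (- a * t) * exp (- b * (x - t)) * exp (- b * (y - t)) = exp (- b * (x + y)) * exp ((2*b-a)*t)"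
proof -
  have "exp (- a * t) * exp (- b * (x - t)) * exp (- b * (y - t)) = exp (- a * t + - b * (x - t) + - b * (y - t))"
    by (simp only: exp_add)
  also have "- a * t + - b * (x - t) + - b * (y - t) = - b * (x + y) + (2*b-a)*t" by algebra
  finally show ?thesis by (simp only: exp_add)
qed

lemma G_eq:
  fixes a b x y :: real
  assumes "a>0" "b>0" "a \<noteq> 2*b" "0 \<le> x" "0 \<le> y"
  shows "(\<integral>t0\<in>{0..}. p_em a t0 * psi b t0 x * psi b t0 y \<partial>lborel)
     = 2*a*b * exp(-b*(x+y)) * (exp((2*b-a)*min x y) - 1) / (2*b-a)"
proof -
  define m where "m = min x y"
  have m0: "0 \<le> m" using assms by (simp add: m_def)
  have sq: "sqrt(2*b) * sqrt(2*b) = 2*b" using assms by simp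
  have pw: "indicator {0..} t * (p_em a t * psi b t x * psi b t y)
      = indicator {0..m} t * (2*a*b*exp(-b*(x+y)) * exp((2*b-a)*t))" for t
  proof (cases "0 \<le> t \<and> t \<le> m")
    case True
    then have "t \<le> x" "t \<le> y" by (auto simp: m_def)
    then have "p_em a t * psi b t x * psi b t y = a * (sqrt(2*b) * sqrt(2*b)) * (exp (- a * t) * exp (- b * (x - t)) * exp (- b * (y - t)))"
      using True by (simp add: p_em_def psi_def)
    also have "\<dots> = 2*a*b*exp(-b*(x+y)) * exp((2*b-a)*t)" unfolding sq exp3 by simp
    finally show ?thesis using True by simp
  next
    case False
    then have "t < 0 \<or> x < t \<or> y < t" by (auto simp: m_def)
    then show ?thesis using False by (auto simp: p_em_def psi_def)
  qed
  have "(\<integral>t0\<in>{0..}. p_em a t0 * psi b t0 x * psi b t0 y \<partial>lborel)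
      = (\<integral>t\<in>{0..m}. 2*a*b*exp(-b*(x+y)) * exp((2*b-a)*t) \<partial>lborel)"
    unfolding set_lebesgue_integral_def using pw by simp
  also have "\<dots> = integral {0..m} (\<lambda>t. 2*a*b*exp(-b*(x+y)) * exp((2*b-a)*t))"
    by (rule lint_Icc) (intro continuous_intros)
  also have "\<dots> = 2*a*b*exp(-b*(x+y)) * ((exp((2*b-a)*m) - exp((2*b-a)*0))/(2*b-a))"
    using hi_exp[of "2*b-a" 0 m] assms m0 by (simp add: integral_unique)
  finally show ?thesis by (simp add: m_def)
qed

lemma (in pair_sigma_finite) int_prod:
  fixes f :: "'a \<Rightarrow> real" and g :: "'b \<Rightarrow> real"
  assumes f: "integrable M1 f" and g: "integrable M2 g"
  shows "integrable (M1 \<Otimes>\<^sub>M M2) (\<lambda>(x,y). f x * g y)"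
    and "integral\<^sup>L (M1 \<Otimes>\<^sub>M M2) (\<lambda>(x,y). f x * g y) = integral\<^sup>L M1 f * integral\<^sup>L M2 g"
proof -
  have mf[measurable]: "f \<in> borel_measurable M1" using f by auto
  have mg[measurable]: "g \<in> borel_measurable M2" using g by auto
  have "(\<integral>\<^sup>+z. ennreal (norm ((\<lambda>(x,y). f x * g y) z)) \<partial>(M1 \<Otimes>\<^sub>M M2))
      = (\<integral>\<^sup>+x. \<integral>\<^sup>+y. ennreal (norm (f x)) * ennreal (norm (g y)) \<partial>M2 \<partial>M1)"
    by (subst M2.nn_integral_fst[symmetric]) (auto simp: ennreal_mult abs_mult)
  also have "\<dots> = (\<integral>\<^sup>+x. ennreal (norm (f x)) * (\<integral>\<^sup>+y. ennreal (norm (g y)) \<partial>M2) \<partial>M1)"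
    by (intro nn_integral_cong nn_integral_cmult) auto
  also have "\<dots> = (\<integral>\<^sup>+x. ennreal (norm (f x)) \<partial>M1) * (\<integral>\<^sup>+y. ennreal (norm (g y)) \<partial>M2)"
    by (rule nn_integral_multc) auto
  also have "\<dots> < \<infinity>" using f g by (simp add: integrable_iff_bounded ennreal_mult_less_top)
  finally show int: "integrable (M1 \<Otimes>\<^sub>M M2) (\<lambda>(x,y). f x * g y)"
    by (subst integrable_iff_bounded) auto
  have "integral\<^sup>L (M1 \<Otimes>\<^sub>M M2) (\<lambda>(x,y). f x * g y) = (\<integral>x. (\<integral>y. f x * g y \<partial>M2) \<partial>M1)"
    using integral_fst'[OF int] by simp
  also have "\<dots> = (\<integral>x. f x * integral\<^sup>L M2 g \<partial>M1)" by simp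
  also have "\<dots> = integral\<^sup>L M1 f * integral\<^sup>L M2 g" by simp
  finally show "integral\<^sup>L (M1 \<Otimes>\<^sub>M M2) (\<lambda>(x,y). f x * g y) = integral\<^sup>L M1 f * integral\<^sup>L M2 g" .
qed

lemma int_w:
  fixes a :: real assumes "a > 0"
  shows "integrable lborel (\<lambda>t. indicator {0..} t * (a * exp (- a * t)))"
proof -
  have "(\<lambda>t. a * exp (- a * t)) integrable_on {0..}"
    using integrable_on_mult_right[OF integrable_on_exp_minus_to_infinity[OF assms, of 0]] by simp
  then have "(\<lambda>t. a * exp (- a * t)) absolutely_integrable_on {0..}"
    by (rule nonnegative_absolutely_integrable_1) (use assms in auto)
  then have "integrable lebesgue (\<lambda>t. indicator {0..} t * (a * exp (- a * t)))"
    by (simp add: set_integrable_def)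
  then show ?thesis
    by (subst (asm) integrable_completion) auto
qed

lemma psi_bound:
  fixes b t0 t :: real assumes "b > 0"
  shows "\<bar>psi b t0 t\<bar> \<le> sqrt (2*b)"
proof -
  have "exp (- b * (t - t0)) \<le> 1" if "t0 \<le> t" using assms that by simp
  then show ?thesis using assms by (auto simp: psi_def abs_mult)
qed

lemma psi2_bound:
  fixes b t0 t t' t0' :: real assumes "b > 0"
  shows "\<bar>psi b t0 t * psi b t0' t'\<bar> \<le> 2*b"
proof -
  have "\<bar>psi b t0 t * psi b t0' t'\<bar> \<le> sqrt (2*b) * sqrt (2*b)"
    unfolding abs_mult using assms by (intro mult_mono psi_bound assms) auto
  then show ?thesis using assms by simp
qed

definition wfn :: "real \<Rightarrow> real \<Rightarrow> real \<Rightarrow> real \<Rightarrow> real \<Rightarrow> real" where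
  "wfn a b u v t = indicator {0..} t * (p_em a t * psi b t u * psi b t v)"

lemma wf_meas[measurable]: "wfn a b u v \<in> borel_measurable borel"
  unfolding wfn_def by measurable

lemma int_wf:
  fixes a b :: real assumes "a > 0" "b > 0"
  shows "integrable lborel (wfn a b u v)"
proof (rule Bochner_Integration.integrable_bound[where f="\<lambda>t. 2*b * (indicator {0..} t * (a * exp (- a * t)))"])
  show "integrable lborel (\<lambda>t. 2*b * (indicator {0..} t * (a * exp (- a * t))))"
    using int_w[OF assms(1)] by simp
  show "AE t in lborel. norm (wfn a b u v t) \<le> norm (2*b * (indicator {0..} t * (a * exp (- a * t))))"
  proof (rule AE_I2)
    fix t
    have "\<bar>psi b t u * psi b t v\<bar> \<le> 2*b" by (rule psi2_bound[OF assms(2)])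
    then have "\<bar>a * exp (- a * t) * (psi b t u * psi b t v)\<bar> \<le> a * exp (- a * t) * (2*b)"
      using assms by (simp add: abs_mult mult_left_mono)
    then show "norm (wfn a b u v t) \<le> norm (2*b * (indicator {0..} t * (a * exp (- a * t))))"
      using assms by (auto simp: wfn_def p_em_def indicator_def mult.assoc mult.commute mult.left_commute)
  qed
qed simp

definition Rset :: "real \<Rightarrow> real \<Rightarrow> (real \<times> real) set" where
  "Rset T \<tau> = {s::real\<times>real. 0 \<le> fst s \<and> fst s \<le> T \<and> 0 \<le> snd s \<and> snd s \<le> T
                              \<and> \<bar>fst s - snd s\<bar> \<le> \<tau>}"

definition Gf :: "real \<Rightarrow> real \<Rightarrow> real \<Rightarrow> real \<Rightarrow> real" where
  "Gf a b x y = (\<integral>t0\<in>{0..}. p_em a t0 * psi b t0 x * psi b t0 y \<partial>lborel)"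

definition Gc :: "real \<Rightarrow> real \<Rightarrow> real \<Rightarrow> real \<Rightarrow> real" where
  "Gc a b x y = 2*a*b * exp(-b*(x+y)) * (exp((2*b-a)*min x y) - 1) / (2*b-a)"

lemma Gf_Gc: "a>0 \<Longrightarrow> b>0 \<Longrightarrow> a \<noteq> 2*b \<Longrightarrow> 0 \<le> x \<Longrightarrow> 0 \<le> y \<Longrightarrow> Gf a b x y = Gc a b x y"
  unfolding Gf_def Gc_def by (rule G_eq)

lemma Gc_sym: "Gc a b x y = Gc a b y x"
  unfolding Gc_def by (simp add: min.commute add.commute)

lemma Gc_cont[continuous_intros]:
  assumes "continuous_on S f" "continuous_on S g"
  shows "continuous_on S (\<lambda>s. Gc a b (f s) (g s))"
  unfolding Gc_def divide_inverse by (intro continuous_intros assms)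

lemma pdens_eq: "p_dens \<eta> a b t = \<eta> * Gf a b t t"
  unfolding p_dens_def Gf_def by (simp add: power2_eq_square mult.assoc)

lemma Rset_compact: "compact (Rset T \<tau>)"
proof -
  have "Rset T \<tau> = ({0..T}\<times>{0..T}) \<inter> {s. \<bar>fst s - snd s\<bar> \<le> \<tau>}" by (auto simp: Rset_def)
  moreover have "closed {s::real\<times>real. \<bar>fst s - snd s\<bar> \<le> \<tau>}"
    by (intro closed_Collect_le continuous_intros)
  ultimately show ?thesis by (simp add: compact_Int_closed compact_Times)
qed

lemma Rset_sets[measurable]: "Rset T \<tau> \<in> sets borel"
  using Rset_compact by (simp add: borel_closed compact_imp_closed)

lemma Rset_sets2[measurable]: "Rset T \<tau> \<in> sets (lborel \<Otimes>\<^sub>M lborel)"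
  using Rset_sets by (simp only: lborel_prod sets_lborel)

lemma int_R:
  fixes h :: "real\<times>real \<Rightarrow> real"
  assumes "continuous_on (Rset T \<tau>) h"
  shows "integrable lborel (\<lambda>s. indicator (Rset T \<tau>) s * h s)"
  using borel_integrable_compact[OF Rset_compact assms] by simp

lemma phph_eq:
  fixes a b \<eta> T \<tau> :: real
  assumes "a > 0" "b > 0" "a \<noteq> 2 * b" "p_det \<eta> a b T \<noteq> 0"
  shows "(p_det \<eta> a b T)\<^sup>2 * p_phph \<eta> a b T \<tau> =
     \<eta>\<^sup>2 * (\<integral>s. indicator (Rset T \<tau>) s * (Gc a b (fst s) (fst s) * Gc a b (snd s) (snd s)) \<partial>lborel)"
proof -
  define pd where "pd = p_det \<eta> a b T"
  have pw: "indicator {x::real\<times>real. \<bar>fst x - snd x\<bar> \<le> \<tau>} s *\<^sub>R (p_T \<eta> a b T (fst s) * p_T \<eta> a b T (snd s))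
     = \<eta>\<^sup>2 / pd\<^sup>2 * (indicator (Rset T \<tau>) s * (Gc a b (fst s) (fst s) * Gc a b (snd s) (snd s)))" for s
  proof (cases "s \<in> Rset T \<tau>")
    case True
    then have "0 \<le> fst s" "0 \<le> snd s" by (auto simp: Rset_def)
    with True show ?thesis using assms
      by (auto simp: Rset_def p_T_def pdens_eq Gf_Gc pd_def power2_eq_square)
  next
    case False
    then show ?thesis by (auto simp: Rset_def p_T_def indicator_def)
  qed
  have "p_phph \<eta> a b T \<tau> = \<eta>\<^sup>2 / pd\<^sup>2 * (\<integral>s. indicator (Rset T \<tau>) s * (Gc a b (fst s) (fst s) * Gc a b (snd s) (snd s)) \<partial>lborel)"
    unfolding p_phph_def set_lebesgue_integral_def pw by simp
  then show ?thesis using assms(4) by (simp add: pd_def)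
qed

lemma int_wfn_Gf: "integral\<^sup>L lborel (wfn a b u v) = Gf a b u v"
  unfolding Gf_def set_lebesgue_integral_def wfn_def by simp

lemma same_inner:
  fixes a b u v :: real
  assumes "a > 0" "b > 0"
  shows "(\<integral>e. indicator ({0..}\<times>{0..}) e * (p_em a (fst e) * p_em a (snd e) *
           (psi b (fst e) u * psi b (snd e) v - psi b (fst e) v * psi b (snd e) u)\<^sup>2) \<partial>lborel)
       = 2 * Gf a b u u * Gf a b v v - 2 * Gf a b u v * Gf a b v u"
proof -
  define P1 where "P1 = (\<lambda>(x,y). wfn a b u u x * wfn a b v v y)"
  define P2 where "P2 = (\<lambda>(x,y). wfn a b v v x * wfn a b u u y)"
  define P3 where "P3 = (\<lambda>(x,y). wfn a b u v x * wfn a b v u y)"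
  have i1: "integrable (lborel \<Otimes>\<^sub>M lborel) P1" "integrable (lborel \<Otimes>\<^sub>M lborel) P2"
     "integrable (lborel \<Otimes>\<^sub>M lborel) P3"
    unfolding P1_def P2_def P3_def using assms by (auto intro!: lborel_pair.int_prod(1) int_wf)
  have e1: "integral\<^sup>L (lborel \<Otimes>\<^sub>M lborel) P1 = Gf a b u u * Gf a b v v"
     "integral\<^sup>L (lborel \<Otimes>\<^sub>M lborel) P2 = Gf a b v v * Gf a b u u"
     "integral\<^sup>L (lborel \<Otimes>\<^sub>M lborel) P3 = Gf a b u v * Gf a b v u"
    unfolding P1_def P2_def P3_def using assms by (auto simp: lborel_pair.int_prod(2) int_wf int_wfn_Gf)
  have pw: "(\<lambda>e::real\<times>real. indicator ({0..}\<times>{0..}) e * (p_em a (fst e) * p_em a (snd e) *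
           (psi b (fst e) u * psi b (snd e) v - psi b (fst e) v * psi b (snd e) u)\<^sup>2))
       = (\<lambda>e. P1 e + P2 e - 2 * P3 e)"
  proof
    fix e :: "real\<times>real"
    obtain x y where e: "e = (x,y)" by (cases e)
    show "indicator ({0..}\<times>{0..}) e * (p_em a (fst e) * p_em a (snd e) *
           (psi b (fst e) u * psi b (snd e) v - psi b (fst e) v * psi b (snd e) u)\<^sup>2)
       = P1 e + P2 e - 2 * P3 e"
      unfolding e wfn_def P1_def P2_def P3_def
      by (cases "0 \<le> x"; cases "0 \<le> y") (simp_all add: indicator_def power2_eq_square algebra_simps)
  qed
  have "(\<integral>e. P1 e + P2 e - 2 * P3 e \<partial>(lborel \<Otimes>\<^sub>M lborel)) = 
     (\<integral>e. P1 e + P2 e \<partial>(lborel \<Otimes>\<^sub>M lborel)) - (\<integral>e. 2 * P3 e \<partial>(lborel \<Otimes>\<^sub>M lborel))"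
    using i1 by (intro Bochner_Integration.integral_diff Bochner_Integration.integrable_add integrable_mult_right)
  also have "\<dots> = integral\<^sup>L (lborel \<Otimes>\<^sub>M lborel) P1 + integral\<^sup>L (lborel \<Otimes>\<^sub>M lborel) P2
      - 2 * integral\<^sup>L (lborel \<Otimes>\<^sub>M lborel) P3"
    using i1 by (simp add: Bochner_Integration.integral_add)
  finally have "(\<integral>e. P1 e + P2 e - 2 * P3 e \<partial>(lborel \<Otimes>\<^sub>M lborel)) = 
      Gf a b u u * Gf a b v v + Gf a b v v * Gf a b u u - 2 * (Gf a b u v * Gf a b v u)" unfolding e1 .
  then show ?thesis unfolding pw lborel_prod[symmetric] by simp
qed

lemma same_eq:
  fixes a b \<eta> T \<tau> :: real
  assumes "a > 0" "b > 0" "a \<noteq> 2 * b"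
  shows "P_same \<eta> a b T \<tau> = \<eta>\<^sup>2 / 4 *
     (2 * (\<integral>s. indicator (Rset T \<tau>) s * (Gc a b (fst s) (fst s) * Gc a b (snd s) (snd s)) \<partial>lborel)
    - 2 * (\<integral>s. indicator (Rset T \<tau>) s * (Gc a b (fst s) (snd s))\<^sup>2 \<partial>lborel))"
proof -
  define E where "E = ({0..}\<times>{0..} :: (real\<times>real) set)"
  define R where "R = Rset T \<tau>"
  define F where "F = (\<lambda>e s::real\<times>real. p_em a (fst e) * p_em a (snd e) *
           (psi b (fst e) (fst s) * psi b (snd e) (snd s)
            - psi b (fst e) (snd s) * psi b (snd e) (fst s))\<^sup>2)"
  define H where "H = (\<lambda>e s. indicator E e * (indicator R s * F e s))"
  have 1: "P_same \<eta> a b T \<tau> = \<eta>\<^sup>2 / 4 * (\<integral>e. \<integral>s. H e s \<partial>lborel \<partial>lborel)"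
    unfolding P_same_def set_lebesgue_integral_def H_def F_def E_def R_def Rset_def by simp
  define w where "w = (\<lambda>t::real. indicator {0..} t * (a * exp (- a * t)))"
  define W where "W = (\<lambda>(x,y). w x * w y)"
  define V where "V = (\<lambda>s. indicator R s * (16 * b\<^sup>2))"
  have iW: "integrable lborel W"
    unfolding W_def lborel_prod[symmetric] w_def using assms by (intro lborel_pair.int_prod(1) int_w)
  have iV: "integrable lborel V"
    unfolding V_def R_def by (intro int_R continuous_intros)
  have iWV: "integrable (lborel \<Otimes>\<^sub>M lborel) (\<lambda>(e,s). W e * V s)"
    using iW iV by (rule lborel_pair.int_prod(1))
  have int: "integrable (lborel \<Otimes>\<^sub>M lborel) (case_prod H)"
  proof (rule Bochner_Integration.integrable_bound[OF iWV])
    show "case_prod H \<in> borel_measurable (lborel \<Otimes>\<^sub>M lborel)"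
      unfolding H_def F_def E_def R_def indicator_times lborel_prod[symmetric] by measurable
    show "AE z in lborel \<Otimes>\<^sub>M lborel. norm (case_prod H z) \<le> norm ((\<lambda>(e,s). W e * V s) z)"
    proof (rule AE_I2)
      fix z :: "(real\<times>real)\<times>(real\<times>real)"
      obtain e1 e2 s1 s2 where z: "z = ((e1,e2),(s1,s2))" by (metis prod.exhaust)
      show "norm (case_prod H z) \<le> norm ((\<lambda>(e,s). W e * V s) z)"
      proof (cases "0 \<le> e1 \<and> 0 \<le> e2 \<and> (s1,s2) \<in> R")
        case False
        then show ?thesis unfolding z H_def E_def by (auto simp: indicator_def)
      next
        case True
        define X where "X = psi b e1 s1 * psi b e2 s2"
        define Y where "Y = psi b e1 s2 * psi b e2 s1"
        have "\<bar>X\<bar> \<le> 2*b" "\<bar>Y\<bar> \<le> 2*b" unfolding X_def Y_def using assms by (auto intro: psi2_bound)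
        then have "\<bar>X - Y\<bar> \<le> 4*b" by linarith
        then have "(X - Y)\<^sup>2 \<le> (4*b)\<^sup>2" by (metis abs_le_square_iff abs_of_pos assms(2) mult_pos_pos zero_less_numeral)
        then have XY: "(X - Y)\<^sup>2 \<le> 16*b\<^sup>2" by (simp add: power_mult_distrib)
        have pe: "p_em a e1 = a * exp (- a * e1)" "p_em a e2 = a * exp (- a * e2)"
          using True by (auto simp: p_em_def)
        have "case_prod H z = (a * exp (- a * e1)) * (a * exp (- a * e2)) * (X - Y)\<^sup>2"
          using True unfolding z H_def F_def E_def X_def Y_def by (simp add: pe)
        moreover have "(\<lambda>(e,s). W e * V s) z = (a * exp (- a * e1)) * (a * exp (- a * e2)) * (16*b\<^sup>2)"
          using True unfolding z W_def V_def w_def by simp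
        moreover have "(a * exp (- a * e1)) * (a * exp (- a * e2)) * (X - Y)\<^sup>2 \<le> (a * exp (- a * e1)) * (a * exp (- a * e2)) * (16*b\<^sup>2)"
          using XY assms by (intro mult_left_mono) auto
        ultimately show ?thesis using assms by simp
      qed
    qed
  qed
  have 2: "(\<integral>s. \<integral>e. H e s \<partial>lborel \<partial>lborel) = (\<integral>e. \<integral>s. H e s \<partial>lborel \<partial>lborel)"
    by (rule lborel_pair.Fubini_integral[OF int])
  have 3: "(\<integral>e. H e s \<partial>lborel) = indicator R s * (2 * Gc a b (fst s) (fst s) * Gc a b (snd s) (snd s)
        - 2 * (Gc a b (fst s) (snd s))\<^sup>2)" for s
  proof -
    have "(\<integral>e. H e s \<partial>lborel) = (\<integral>e. indicator R s * (indicator E e * F e s) \<partial>lborel)"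
      unfolding H_def by (rule Bochner_Integration.integral_cong) (auto simp: algebra_simps)
    also have "\<dots> = indicator R s * (\<integral>e. indicator E e * F e s \<partial>lborel)"
      by (rule integral_mult_right_zero)
    also have "(\<integral>e. indicator E e * F e s \<partial>lborel) = 2 * Gf a b (fst s) (fst s) * Gf a b (snd s) (snd s)
         - 2 * Gf a b (fst s) (snd s) * Gf a b (snd s) (fst s)"
      unfolding E_def F_def using same_inner[OF assms(1,2)] by simp
    finally show ?thesis
      using assms by (cases "s \<in> R") (auto simp: R_def Rset_def Gf_Gc Gc_sym[of a b "snd s" "fst s"] power2_eq_square)
  qed
  have i4: "integrable lborel (\<lambda>s. indicator R s * (Gc a b (fst s) (fst s) * Gc a b (snd s) (snd s)))"
     "integrable lborel (\<lambda>s. indicator R s * (Gc a b (fst s) (snd s))\<^sup>2)"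
    unfolding R_def by (intro int_R continuous_intros)+
  have "(\<integral>s. \<integral>e. H e s \<partial>lborel \<partial>lborel) = (\<integral>s. 2 * (indicator R s * (Gc a b (fst s) (fst s) * Gc a b (snd s) (snd s)))
        - 2 * (indicator R s * (Gc a b (fst s) (snd s))\<^sup>2) \<partial>lborel)"
    unfolding 3 by (simp add: algebra_simps)
  also have "\<dots> = 2 * (\<integral>s. indicator R s * (Gc a b (fst s) (fst s) * Gc a b (snd s) (snd s)) \<partial>lborel)
    - 2 * (\<integral>s. indicator R s * (Gc a b (fst s) (snd s))\<^sup>2 \<partial>lborel)"
    using i4 by (subst Bochner_Integration.integral_diff) (auto intro: integrable_mult_right)
  finally have X: "(\<integral>s. \<integral>e. H e s \<partial>lborel \<partial>lborel) = 2 * (\<integral>s. indicator R s * (Gc a b (fst s) (fst s) * Gc a b (snd s) (snd s)) \<partial>lborel)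
    - 2 * (\<integral>s. indicator R s * (Gc a b (fst s) (snd s))\<^sup>2 \<partial>lborel)" .
  show ?thesis unfolding 1 2[symmetric] X R_def ..
qed

lemma integral_pos_set:
  fixes f :: "'a::euclidean_space \<Rightarrow> real"
  assumes f: "integrable lborel f" and nn: "\<And>x. f x \<ge> 0" and A: "A \<in> sets lborel"
    and mA: "emeasure lborel A > 0" and pos: "\<And>x. x \<in> A \<Longrightarrow> f x > 0"
  shows "integral\<^sup>L lborel f > 0"
proof -
  have ge: "integral\<^sup>L lborel f \<ge> 0" using nn by simp
  have "integral\<^sup>L lborel f \<noteq> 0"
  proof
    assume "integral\<^sup>L lborel f = 0"
    then have "AE x in lborel. f x = 0" using integral_nonneg_eq_0_iff_AE[OF f] nn by simp
    then have "AE x in lborel. x \<notin> A" by eventually_elim (use pos in force)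
    then have "emeasure lborel A = 0" using AE_iff_measurable[OF A, of "\<lambda>x. x \<notin> A"] by simp
    with mA show False by simp
  qed
  with ge show ?thesis by linarith
qed

lemma Gc_diag_pos:
  fixes a b t :: real
  assumes "a > 0" "b > 0" "a \<noteq> 2*b" "t > 0"
  shows "Gc a b t t > 0"
proof -
  have "(exp ((2*b-a)*t) - 1) / (2*b-a) > 0"
  proof (cases "2*b-a > 0")
    case True then show ?thesis using assms by (simp add: divide_pos_pos)
  next
    case False then have "2*b-a < 0" using assms by simp
    then have "exp ((2*b-a)*t) < 1" using assms by (simp add: mult_neg_pos)
    with \<open>2*b-a < 0\<close> show ?thesis by (simp add: divide_neg_neg)
  qed
  then have pos: "2*a*b * exp(-b*(t+t)) * ((exp((2*b-a)*t) - 1) / (2*b-a)) > 0" using assms by (intro mult_pos_pos) auto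
  then show ?thesis using pos by (simp only: Gc_def min.idem times_divide_eq_right)
qed

lemma Gc_diag_nn:
  fixes a b t :: real
  assumes "a > 0" "b > 0" "a \<noteq> 2*b" "t \<ge> 0"
  shows "Gc a b t t \<ge> 0"
  using Gc_diag_pos[OF assms(1-3), of t] assms(4) by (cases "t = 0") (auto simp: Gc_def)

lemma pdet_eq:
  fixes a b \<eta> T :: real
  assumes "a > 0" "b > 0" "a \<noteq> 2 * b"
  shows "p_det \<eta> a b T = \<eta> * (\<integral>t. indicator {0..T} t * Gc a b t t \<partial>lborel)"
proof -
  have "p_det \<eta> a b T = (\<integral>t. \<eta> * (indicator {0..T} t * Gc a b t t) \<partial>lborel)"
    unfolding p_det_def set_lebesgue_integral_def
    by (rule Bochner_Integration.integral_cong) (use assms in \<open>auto simp: pdens_eq Gf_Gc indicator_def\<close>)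
  then show ?thesis by simp
qed

lemma pdet_pos:
  fixes a b \<eta> T :: real
  assumes "a > 0" "b > 0" "a \<noteq> 2 * b" "\<eta> > 0" "T > 0"
  shows "p_det \<eta> a b T > 0"
proof -
  have "(\<integral>t. indicator {0..T} t * Gc a b t t \<partial>lborel) > 0"
  proof (rule integral_pos_set[where A="{0<..<T}"])
    show "integrable lborel (\<lambda>t. indicator {0..T} t * Gc a b t t)"
    proof -
      have "continuous_on {0..T} (\<lambda>t. Gc a b t t)" by (intro continuous_intros)
      from borel_integrable_compact[OF compact_Icc this] show ?thesis by simp
    qed
    show "indicator {0..T} x * Gc a b x x \<ge> 0" for x
      using Gc_diag_nn[OF assms(1-3), of x] by (auto simp: indicator_def)
    show "emeasure lborel {0<..<T} > 0" using assms by simp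
    show "indicator {0..T} x * Gc a b x x > 0" if "x \<in> {0<..<T}" for x
      using Gc_diag_pos[OF assms(1-3), of x] that by (auto simp: indicator_def)
  qed simp
  then show ?thesis using assms by (simp add: pdet_eq)
qed

lemma Q_pos:
  fixes a b T \<tau> :: real
  assumes "a > 0" "b > 0" "a \<noteq> 2 * b" "0 < \<tau>" "\<tau> \<le> T"
  shows "(\<integral>s. indicator (Rset T \<tau>) s * (Gc a b (fst s) (fst s) * Gc a b (snd s) (snd s)) \<partial>lborel) > 0"
proof (rule integral_pos_set[where A="{0<..<\<tau>}\<times>{0<..<\<tau>}"])
  show "integrable lborel (\<lambda>s. indicator (Rset T \<tau>) s * (Gc a b (fst s) (fst s) * Gc a b (snd s) (snd s)))"
    by (intro int_R continuous_intros)
  show "indicator (Rset T \<tau>) x * (Gc a b (fst x) (fst x) * Gc a b (snd x) (snd x)) \<ge> 0" for x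
    using Gc_diag_nn[OF assms(1-3), of "fst x"] Gc_diag_nn[OF assms(1-3), of "snd x"]
    by (auto simp: indicator_def Rset_def)
  show "{0<..<\<tau>}\<times>{0<..<\<tau>} \<in> sets (lborel :: (real\<times>real) measure)"
    by (simp add: lborel_prod[symmetric])
  have "emeasure (lborel :: (real\<times>real) measure) ({0<..<\<tau>}\<times>{0<..<\<tau>}) = ennreal \<tau> * ennreal \<tau>"
    unfolding lborel_prod[symmetric] using assms by (subst lborel.emeasure_pair_measure_Times) auto
  then show "emeasure (lborel :: (real\<times>real) measure) ({0<..<\<tau>}\<times>{0<..<\<tau>}) > 0"
    using assms by (simp add: ennreal_mult[symmetric])
  show "indicator (Rset T \<tau>) x * (Gc a b (fst x) (fst x) * Gc a b (snd x) (snd x)) > 0"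
    if "x \<in> {0<..<\<tau>}\<times>{0<..<\<tau>}" for x
  proof -
    have "x \<in> Rset T \<tau>" using that assms by (auto simp: Rset_def)
    then show ?thesis using that Gc_diag_pos[OF assms(1-3), of "fst x"] Gc_diag_pos[OF assms(1-3), of "snd x"]
      by auto
  qed
qed

lemma sym_split:
  fixes f :: "real\<times>real \<Rightarrow> real"
  assumes int: "integrable lborel f" and sym: "\<And>x y. f (x,y) = f (y,x)"
  shows "integral\<^sup>L lborel f = 2 * (\<integral>z. (\<integral>w. f (w,z) * (if z \<le> w then 1 else 0) \<partial>lborel) \<partial>lborel)"
proof -
  have fm[measurable]: "f \<in> borel_measurable (lborel \<Otimes>\<^sub>M lborel)"
    using int unfolding lborel_prod by auto
  have int2: "integrable (lborel \<Otimes>\<^sub>M lborel) f" using int unfolding lborel_prod .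
  define u where "u = (\<lambda>s. f s * (if snd s \<le> fst s then 1 else 0))"
  define l where "l = (\<lambda>s. f s - u s)"
  have um[measurable]: "u \<in> borel_measurable (lborel \<Otimes>\<^sub>M lborel)" unfolding u_def by measurable
  have iu: "integrable (lborel \<Otimes>\<^sub>M lborel) u"
    by (rule Bochner_Integration.integrable_bound[OF int2 um]) (auto simp: u_def)
  have il: "integrable (lborel \<Otimes>\<^sub>M lborel) l" unfolding l_def using int2 iu by auto
  have iu': "integrable (lborel \<Otimes>\<^sub>M lborel) (\<lambda>(x,y). u (x,y))" using iu by simp
  have il': "integrable (lborel \<Otimes>\<^sub>M lborel) (\<lambda>(x,y). l (x,y))" using il by simp
  have "integral\<^sup>L lborel f = integral\<^sup>L (lborel \<Otimes>\<^sub>M lborel) (\<lambda>s. u s + l s)"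
    unfolding lborel_prod l_def by simp
  also have "\<dots> = integral\<^sup>L (lborel \<Otimes>\<^sub>M lborel) u + integral\<^sup>L (lborel \<Otimes>\<^sub>M lborel) l"
    using iu il by (rule Bochner_Integration.integral_add)
  also have "integral\<^sup>L (lborel \<Otimes>\<^sub>M lborel) u = (\<integral>y. \<integral>x. u (x,y) \<partial>lborel \<partial>lborel)"
    using lborel_pair.integral_snd[OF iu'] by simp
  also have "integral\<^sup>L (lborel \<Otimes>\<^sub>M lborel) l = (\<integral>x. \<integral>y. l (x,y) \<partial>lborel \<partial>lborel)"
    using lborel_pair.integral_fst[OF il'] by simp
  also have "(\<integral>x. \<integral>y. l (x,y) \<partial>lborel \<partial>lborel) = (\<integral>x. \<integral>y. u (y,x) \<partial>lborel \<partial>lborel)"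
  proof (rule Bochner_Integration.integral_cong[OF refl])
    fix x :: real
    show "(\<integral>y. l (x,y) \<partial>lborel) = (\<integral>y. u (y,x) \<partial>lborel)"
    proof (rule integral_cong_AE)
      show "(\<lambda>y. l (x,y)) \<in> borel_measurable lborel" unfolding l_def u_def by measurable
      show "(\<lambda>y. u (y,x)) \<in> borel_measurable lborel" unfolding u_def by measurable
      show "AE y in lborel. l (x,y) = u (y,x)"
        using AE_lborel_singleton[of x] by eventually_elim (auto simp: l_def u_def sym[of x])
    qed
  qed
  finally show ?thesis unfolding u_def by simp
qed

lemma sq_exp: "exp(-b*(w+z))^2 = exp(-2*b*z) * exp((-2*b)*w)" for b w z :: real
  by (simp add: power2_eq_square flip: exp_add) (simp add: algebra_simps)

lemma Phi_eq:
  fixes a b T \<tau> z :: real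
  assumes "a > 0" "b > 0" "a \<noteq> 2 * b" "0 < \<tau>"
  shows "(\<integral>w. indicator (Rset T \<tau>) (w,z) * (Gc a b w z)\<^sup>2 * (if z \<le> w then 1 else 0) \<partial>lborel)
    = indicator {0..T} z * ((2*a*b/(2*b-a))\<^sup>2 * exp(-2*b*z) * (exp((2*b-a)*z) - 1)\<^sup>2 *
        ((exp((-2*b)*min T (z+\<tau>)) - exp((-2*b)*z))/(-2*b)))"
proof (cases "0 \<le> z \<and> z \<le> T")
  case True
  define Kz where "Kz = (2*a*b/(2*b-a))\<^sup>2 * exp(-2*b*z) * (exp((2*b-a)*z) - 1)\<^sup>2"
  define hi where "hi = min T (z+\<tau>)"
  have zhi: "z \<le> hi" using True assms by (simp add: hi_def)
  have pw: "indicator (Rset T \<tau>) (w,z) * (Gc a b w z)\<^sup>2 * (if z \<le> w then 1 else 0)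
     = indicator {z..hi} w * (Kz * exp((-2*b)*w))" for w
  proof (cases "z \<le> w \<and> w \<le> hi")
    case True2: True
    then have "(w,z) \<in> Rset T \<tau>" using True by (auto simp: Rset_def hi_def)
    moreover have "min w z = z" using True2 by simp
    moreover have "(Gc a b w z)\<^sup>2 = Kz * exp((-2*b)*w)"
    proof -
      have "(Gc a b w z)^2 = ((2*a*b)^2 * (exp((2*b-a)*z) - 1)^2 / (2*b-a)^2) * exp(-b*(w+z))^2"
        unfolding Gc_def \<open>min w z = z\<close> by (simp add: power_mult_distrib power_divide)
      also have "\<dots> = Kz * exp((-2*b)*w)" unfolding sq_exp Kz_def by (simp add: power_divide power_mult_distrib mult_ac)
      finally show ?thesis .
    qed
    ultimately show ?thesis using True2 by simp
  next
    case False
    then have "\<not> z \<le> w \<or> (w,z) \<notin> Rset T \<tau>" by (auto simp: Rset_def hi_def)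
    then show ?thesis using False by (auto simp: indicator_def)
  qed
  have "(\<integral>w. indicator (Rset T \<tau>) (w,z) * (Gc a b w z)\<^sup>2 * (if z \<le> w then 1 else 0) \<partial>lborel)
     = (\<integral>w\<in>{z..hi}. Kz * exp((-2*b)*w) \<partial>lborel)"
    unfolding pw set_lebesgue_integral_def by simp
  also have "\<dots> = integral {z..hi} (\<lambda>w. Kz * exp((-2*b)*w))"
    by (rule lint_Icc) (intro continuous_intros)
  also have "\<dots> = Kz * ((exp((-2*b)*hi) - exp((-2*b)*z))/(-2*b))"
    using hi_exp[of "-2*b" z hi] zhi assms by (simp add: integral_unique)
  finally show ?thesis using True by (simp add: Kz_def hi_def)
next
  case False
  then have "indicator (Rset T \<tau>) (w,z) = (0::real)" for w by (auto simp: Rset_def)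
  then show ?thesis using False by simp
qed

lemma hi_neg:
  fixes k l u :: real
  assumes "k \<noteq> 0" "l \<le> u"
  shows "((\<lambda>z. exp ((-k)*z)) has_integral (exp((-k)*l) - exp((-k)*u))/k) {l..u}"
proof -
  have "(exp((-k)*u) - exp((-k)*l))/(-k) = (exp((-k)*l) - exp((-k)*u))/k"
    using assms by (simp add: field_simps)
  with hi_exp[of "-k" l u] assms show ?thesis by simp
qed

lemma alg1g:
  fixes a b c d e m1 m2 m3 m4 m5 m6 w :: real
  assumes "a \<noteq> 0" "b \<noteq> 0" "d \<noteq> 0" "e \<noteq> 0" and deq: "d = a + 2*b" and eeq: "e = 2*b - 2*a"
    and ceq: "c = 2*b - a"
  shows "(1-w)*((1-m1)/(2*a) - 2*((1-m2)/d) + (1-m3)/(4*b))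
     + ((m1-m4)/(2*a) - 2*((m2-m5)/d) + (m3-m6)/(4*b)
        - ((m4 - m1*w)/e - 2*((m2*w - m5)/a) + (m3*w - m6)/(2*b)))
   = c^2/(4*a*b*d)*(1-w) + b/(a*(-e))*(m4 - m1*w) + 1/(4*b)*(m6 - m3*w)
     - 4*b/(a*d)*(m5 - m2*w)"
  using assms(1-4)
  apply (simp add: field_simps)
  using deq eeq ceq by algebra

lemma alg2g:
  fixes a b c d e :: real
  assumes "a \<noteq> 0" "b \<noteq> 0" "c \<noteq> 0" "d \<noteq> 0" "e \<noteq> 0"
  shows "2*((2*a*b/c)\<^sup>2/(2*b)) * (c^2/(4*a*b*d)) = a/d"
    "2*((2*a*b/c)\<^sup>2/(2*b)) * (b/(a*e)) = 4*a*b^2/(c^2*e)"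
    "2*((2*a*b/c)\<^sup>2/(2*b)) * (1/(4*b)) = a^2/c^2"
    "2*((2*a*b/c)\<^sup>2/(2*b)) * (4*b/(a*d)) = 16*a*b^2/(c^2*d)"
  using assms by (simp_all add: field_simps power2_eq_square)

lemma core1: "exp((-(2*b))*z) * (exp((2*b-a)*z) - 1)\<^sup>2 = exp((2*b-2*a)*z) - 2*exp((-a)*z) + exp((-(2*b))*z)"
  for a b z :: real
proof -
  have e1: "exp((-(2*b))*z) * (exp((2*b-a)*z) * exp((2*b-a)*z)) = exp((2*b-2*a)*z)"
    unfolding exp_add[symmetric] by (simp add: algebra_simps)
  have e2: "exp((-(2*b))*z) * exp((2*b-a)*z) = exp((-a)*z)"
    unfolding exp_add[symmetric] by (simp add: algebra_simps)
  have "exp((-(2*b))*z) * (exp((2*b-a)*z) - 1)\<^sup>2 = exp((-(2*b))*z) * (exp((2*b-a)*z) * exp((2*b-a)*z))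
     - 2 * (exp((-(2*b))*z) * exp((2*b-a)*z)) + exp((-(2*b))*z)"
    by (simp add: power2_eq_square algebra_simps)
  then show ?thesis by (simp only: e1 e2)
qed

lemma core2: "exp((-(2*b))*z) * (exp((2*b-2*a)*z) - 2*exp((-a)*z) + exp((-(2*b))*z))
   = exp((-(2*a))*z) - 2*exp((-(a+2*b))*z) + exp((-(4*b))*z)"
  for a b z :: real
proof -
  have e1: "exp((-(2*b))*z) * exp((2*b-2*a)*z) = exp((-(2*a))*z)"
    unfolding exp_add[symmetric] by (simp add: algebra_simps)
  have e2: "exp((-(2*b))*z) * exp((-a)*z) = exp((-(a+2*b))*z)"
    unfolding exp_add[symmetric] by (simp add: algebra_simps)
  have e3: "exp((-(2*b))*z) * exp((-(2*b))*z) = exp((-(4*b))*z)"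
    unfolding exp_add[symmetric] by (simp add: algebra_simps)
  have "exp((-(2*b))*z) * (exp((2*b-2*a)*z) - 2*exp((-a)*z) + exp((-(2*b))*z))
     = exp((-(2*b))*z) * exp((2*b-2*a)*z) - 2*(exp((-(2*b))*z) * exp((-a)*z)) + exp((-(2*b))*z) * exp((-(2*b))*z)"
    by (simp add: algebra_simps)
  then show ?thesis by (simp only: e1 e2 e3)
qed

lemma rearr1: "x * y * (e * w / d) = x / d * w * (e * y)" for x y e w d :: real
  by (simp add: divide_inverse mult_ac)

lemma rearr2: "x * y * ((e - z) / d) = x / d * (e * y - z * y)" for x y e z d :: real
  by (simp add: divide_inverse algebra_simps)

lemma lin4: "2*(K*(P*x + Q*y + R*z - S*t)) = 2*K*P*x + 2*K*Q*y + 2*K*R*z - 2*K*S*t" for K P Q R S x y z t :: real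
  by (simp add: algebra_simps)

lemma zz: "Z*((X-Y)/k) = (Z*X - Z*Y)/k" for Z X Y k :: real
  by (simp add: right_diff_distrib)

lemma Gamma_eq:
  fixes a b T \<tau> :: real
  assumes "a > 0" "b > 0" "a \<noteq> 2 * b" "a \<noteq> b" "T > 0" "0 < \<tau>" "\<tau> \<le> T"
  shows "(\<integral>s. indicator (Rset T \<tau>) s * (Gc a b (fst s) (snd s))\<^sup>2 \<partial>lborel) =
    a / (a + 2 * b) * (1 - exp (- 2 * b * \<tau>))
    + 2 * a * b\<^sup>2 / ((a - 2 * b)\<^sup>2 * (a - b)) * (1 - exp (2 * (a - b) * \<tau>)) * exp (- 2 * a * T)
    + a\<^sup>2 / (a - 2 * b)\<^sup>2 * (1 - exp (2 * b * \<tau>)) * exp (- 4 * b * T)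
    - 16 * a * b\<^sup>2 / ((a - 2 * b)\<^sup>2 * (a + 2 * b)) * (1 - exp (a * \<tau>)) * exp (- (a + 2 * b) * T)"
proof -
  define K' where "K' = (2*a*b/(2*b-a))\<^sup>2/(2*b)"
  define L where "L = T - \<tau>"
  define W where "W = exp((-(2*b))*\<tau>)"
  define Z where "Z = exp((-(2*b))*T)"
  define \<phi> where "\<phi> = (\<lambda>z. (2*a*b/(2*b-a))\<^sup>2 * exp(-2*b*z) * (exp((2*b-a)*z) - 1)\<^sup>2 *
        ((exp((-2*b)*min T (z+\<tau>)) - exp((-2*b)*z))/(-2*b)))"
  define g1 where "g1 = (\<lambda>z. K' * (1 - W) * (exp((-(2*a))*z) - 2*exp((-(a+2*b))*z) + exp((-(4*b))*z)))"
  define g2 where "g2 = (\<lambda>z. K' * ((exp((-(2*a))*z) - 2*exp((-(a+2*b))*z) + exp((-(4*b))*z))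
       - (Z*exp((2*b-2*a)*z) - 2*(Z*exp((-a)*z)) + Z*exp((-(2*b))*z))))"
  define f where "f = (\<lambda>s::real\<times>real. indicator (Rset T \<tau>) s * (Gc a b (fst s) (snd s))\<^sup>2)"
  have fint: "integrable lborel f" unfolding f_def by (intro int_R continuous_intros)
  have fsym: "f (x,y) = f (y,x)" for x y
    unfolding f_def by (auto simp: Rset_def indicator_def Gc_sym[of a b x y] abs_minus_commute)
  have s1: "integral\<^sup>L lborel f = 2 * (\<integral>z. (\<integral>w. f (w,z) * (if z \<le> w then 1 else 0) \<partial>lborel) \<partial>lborel)"
    by (rule sym_split[OF fint fsym])
  have s2: "(\<integral>w. f (w,z) * (if z \<le> w then 1 else 0) \<partial>lborel) = indicator {0..T} z * \<phi> z" for z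
    unfolding f_def \<phi>_def using Phi_eq[OF assms(1-3,6)] by simp
  have \<phi>c: "continuous_on {0..T} \<phi>" unfolding \<phi>_def divide_inverse by (intro continuous_intros)
  have s3: "(\<integral>z. indicator {0..T} z * \<phi> z \<partial>lborel) = integral {0..T} \<phi>"
    using lint_Icc[OF \<phi>c] by (simp add: set_lebesgue_integral_def)
  have L0: "0 \<le> L" "L \<le> T" using assms by (auto simp: L_def)
  have s4: "integral {0..T} \<phi> = integral {0..L} \<phi> + integral {L..T} \<phi>"
    using Henstock_Kurzweil_Integration.integral_combine[OF L0 integrable_continuous_interval[OF \<phi>c]] by simp
  have p1: "\<phi> z = g1 z" if "z \<in> {0..L}" for z
  proof -
    have m: "min T (z+\<tau>) = z+\<tau>" using that by (simp add: L_def)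
    have e1: "exp((-2*b)*(z+\<tau>)) = exp((-(2*b))*z) * W"
      unfolding W_def exp_add[symmetric] by (simp add: algebra_simps)
    have q: "(exp((-2*b)*min T (z+\<tau>)) - exp((-2*b)*z))/(-2*b) = exp((-(2*b))*z) * (1-W) / (2*b)"
      unfolding m e1 using assms by (simp add: field_simps)
    have "\<phi> z = (2*a*b/(2*b-a))\<^sup>2 * (exp(-2*b*z) * (exp((2*b-a)*z) - 1)\<^sup>2) * (exp((-(2*b))*z) * (1-W) / (2*b))"
      unfolding \<phi>_def q by (simp only: mult.assoc)
    also have "\<dots> = (2*a*b/(2*b-a))\<^sup>2 * (exp((2*b-2*a)*z) - 2*exp((-a)*z) + exp((-(2*b))*z)) * (exp((-(2*b))*z) * (1-W) / (2*b))"
      using core1[of b z a] by simp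
    also have "\<dots> = K' * (1-W) * (exp((-(2*b))*z) * (exp((2*b-2*a)*z) - 2*exp((-a)*z) + exp((-(2*b))*z)))"
      unfolding rearr1 K'_def ..
    also have "\<dots> = g1 z" unfolding core2 g1_def ..
    finally show ?thesis .
  qed
  have p2: "\<phi> z = g2 z" if "z \<in> {L..T}" for z
  proof -
    have m: "min T (z+\<tau>) = T" using that by (simp add: L_def)
    have q: "(exp((-2*b)*min T (z+\<tau>)) - exp((-2*b)*z))/(-2*b) = (exp((-(2*b))*z) - Z) / (2*b)"
      unfolding m Z_def using assms by (simp add: field_simps)
    have "\<phi> z = (2*a*b/(2*b-a))\<^sup>2 * (exp(-2*b*z) * (exp((2*b-a)*z) - 1)\<^sup>2) * ((exp((-(2*b))*z) - Z) / (2*b))"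
      unfolding \<phi>_def q by (simp only: mult.assoc)
    also have "\<dots> = (2*a*b/(2*b-a))\<^sup>2 * (exp((2*b-2*a)*z) - 2*exp((-a)*z) + exp((-(2*b))*z)) * ((exp((-(2*b))*z) - Z) / (2*b))"
      using core1[of b z a] by simp
    also have "\<dots> = K' * (exp((-(2*b))*z) * (exp((2*b-2*a)*z) - 2*exp((-a)*z) + exp((-(2*b))*z))
        - Z * (exp((2*b-2*a)*z) - 2*exp((-a)*z) + exp((-(2*b))*z)))"
      unfolding rearr2 K'_def ..
    also have "\<dots> = g2 z" unfolding core2 g2_def by (simp add: algebra_simps)
    finally show ?thesis .
  qed
  define V1 where "V1 = K' * (1 - W) * ((exp((-(2*a))*0) - exp((-(2*a))*L))/(2*a)
     - 2*((exp((-(a+2*b))*0) - exp((-(a+2*b))*L))/(a+2*b)) + (exp((-(4*b))*0) - exp((-(4*b))*L))/(4*b))"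
  define V2 where "V2 = K' * (((exp((-(2*a))*L) - exp((-(2*a))*T))/(2*a)
     - 2*((exp((-(a+2*b))*L) - exp((-(a+2*b))*T))/(a+2*b)) + (exp((-(4*b))*L) - exp((-(4*b))*T))/(4*b))
     - (Z*((exp((2*b-2*a)*T) - exp((2*b-2*a)*L))/(2*b-2*a)) - 2*(Z*((exp((-a)*L) - exp((-a)*T))/a))
        + Z*((exp((-(2*b))*L) - exp((-(2*b))*T))/(2*b))))"
  have i1: "(g1 has_integral V1) {0..L}"
    unfolding g1_def V1_def using assms L0
    by (intro has_integral_mult_right has_integral_add has_integral_diff hi_neg) auto
  have i2: "(g2 has_integral V2) {L..T}"
    unfolding g2_def V2_def using assms L0
    by (intro has_integral_mult_right has_integral_add has_integral_diff hi_neg hi_exp) auto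
  have v1: "integral {0..L} \<phi> = V1"
    using integral_cong[of "{0..L}" \<phi> g1] p1 integral_unique[OF i1] by simp
  have v2: "integral {L..T} \<phi> = V2"
    using integral_cong[of "{L..T}" \<phi> g2] p2 integral_unique[OF i2] by simp
  have G: "(\<integral>s. indicator (Rset T \<tau>) s * (Gc a b (fst s) (snd s))\<^sup>2 \<partial>lborel) = 2 * (V1 + V2)"
    using s1 s2 s3 s4 v1 v2 unfolding f_def by simp
  define m1 where "m1 = exp((-(2*a))*L)"
  define m2 where "m2 = exp((-(a+2*b))*L)"
  define m3 where "m3 = exp((-(4*b))*L)"
  define m4 where "m4 = exp((-(2*a))*T)"
  define m5 where "m5 = exp((-(a+2*b))*T)"
  define m6 where "m6 = exp((-(4*b))*T)"
  have r1: "Z*exp((2*b-2*a)*T) = m4" unfolding Z_def m4_def exp_add[symmetric] by (simp add: algebra_simps)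
  have r2: "Z*exp((2*b-2*a)*L) = m1*W" unfolding Z_def m1_def W_def L_def exp_add[symmetric] by (simp add: algebra_simps)
  have r3: "Z*exp((-a)*L) = m2*W" unfolding Z_def m2_def W_def L_def exp_add[symmetric] by (simp add: algebra_simps)
  have r4: "Z*exp((-a)*T) = m5" unfolding Z_def m5_def exp_add[symmetric] by (simp add: algebra_simps)
  have r5: "Z*exp((-(2*b))*L) = m3*W" unfolding Z_def m3_def W_def L_def exp_add[symmetric] by (simp add: algebra_simps)
  have r6: "Z*exp((-(2*b))*T) = m6" unfolding Z_def m6_def exp_add[symmetric] by (simp add: algebra_simps)
  have V1': "V1 = K' * (1 - W) * ((1-m1)/(2*a) - 2*((1-m2)/(a+2*b)) + (1-m3)/(4*b))"
    unfolding V1_def m1_def m2_def m3_def by (simp only: mult_zero_right exp_zero)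
  have V2': "V2 = K' * (((m1-m4)/(2*a) - 2*((m2-m5)/(a+2*b)) + (m3-m6)/(4*b))
     - ((m4 - m1*W)/(2*b-2*a) - 2*((m2*W - m5)/a) + (m3*W - m6)/(2*b)))"
    unfolding V2_def m1_def m2_def m3_def m4_def m5_def m6_def[symmetric] zz
    unfolding m1_def[symmetric] m2_def[symmetric] m3_def[symmetric] m4_def[symmetric] m5_def[symmetric] m6_def[symmetric] r1 r2 r3 r4 r5 r6
    ..
  have nz: "a \<noteq> 0" "b \<noteq> 0" "a + 2*b \<noteq> 0" "2*b - 2*a \<noteq> 0" "2*b - a \<noteq> 0" using assms by auto
  have "V1 + V2 = K' * ((1-W)*((1-m1)/(2*a) - 2*((1-m2)/(a+2*b)) + (1-m3)/(4*b))
     + ((m1-m4)/(2*a) - 2*((m2-m5)/(a+2*b)) + (m3-m6)/(4*b)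
        - ((m4 - m1*W)/(2*b-2*a) - 2*((m2*W - m5)/a) + (m3*W - m6)/(2*b))))"
    unfolding V1' V2' by (simp only: mult.assoc distrib_left)
  also have "\<dots> = K' * ((2*b-a)^2/(4*a*b*(a+2*b))*(1-W) + b/(a*(-(2*b-2*a)))*(m4 - m1*W) + 1/(4*b)*(m6 - m3*W)
     - 4*b/(a*(a+2*b))*(m5 - m2*W))"
    using alg1g[OF nz(1,2,3,4) refl refl refl] by simp
  finally have VV0: "V1 + V2 = K' * ((2*b-a)^2/(4*a*b*(a+2*b))*(1-W) + b/(a*(-(2*b-2*a)))*(m4 - m1*W) + 1/(4*b)*(m6 - m3*W)
     - 4*b/(a*(a+2*b))*(m5 - m2*W))" .
  have VV: "2 * (V1 + V2) = 2*K'*((2*b-a)^2/(4*a*b*(a+2*b)))*(1-W) + 2*K'*(b/(a*(-(2*b-2*a))))*(m4 - m1*W)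
     + 2*K'*(1/(4*b))*(m6 - m3*W) - 2*K'*(4*b/(a*(a+2*b)))*(m5 - m2*W)"
    unfolding VV0 by (rule lin4)
  have nz2: "-(2*b-2*a) \<noteq> 0" using nz by simp
  have c1: "2*K'*((2*b-a)^2/(4*a*b*(a+2*b))) = a/(a+2*b)"
    unfolding K'_def using alg2g(1)[OF nz(1,2,5,3,4)] .
  have c2: "2*K'*(b/(a*(-(2*b-2*a)))) = 2 * a * b\<^sup>2 / ((a - 2 * b)\<^sup>2 * (a - b))"
  proof -
    have "2*K'*(b/(a*(-(2*b-2*a)))) = 4*a*b^2/((2*b-a)^2*(-(2*b-2*a)))"
      unfolding K'_def using alg2g(2)[OF nz(1,2,5,3) nz2] .
    also have "\<dots> = 2 * a * b\<^sup>2 / ((a - 2 * b)\<^sup>2 * (a - b))"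
    proof -
      have "(2*b-a)^2 = (a-2*b)^2" by algebra
      moreover have "(a-2*b)^2 \<noteq> 0" "a - b \<noteq> 0" using assms by auto
      ultimately show ?thesis by (simp add: field_simps)
    qed
    finally show ?thesis .
  qed
  have c3: "2*K'*(1/(4*b)) = a\<^sup>2 / (a - 2 * b)\<^sup>2"
  proof -
    have "(2*b-a)^2 = (a-2*b)^2" by algebra
    then show ?thesis unfolding K'_def using alg2g(3)[OF nz(1,2,5,3,4)] by simp
  qed
  have c4: "2*K'*(4*b/(a*(a+2*b))) = 16 * a * b\<^sup>2 / ((a - 2 * b)\<^sup>2 * (a + 2 * b))"
  proof -
    have "(2*b-a)^2 = (a-2*b)^2" by algebra
    then show ?thesis unfolding K'_def using alg2g(4)[OF nz(1,2,5,3,4)] by simp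
  qed
  have w0: "exp (- 2 * b * \<tau>) = W" unfolding W_def by simp
  have t1: "(1 - exp (2 * (a - b) * \<tau>)) * exp (- 2 * a * T) = m4 - m1*W"
  proof -
    have "exp (2 * (a - b) * \<tau>) * exp (- 2 * a * T) = m1*W"
      unfolding m1_def W_def L_def exp_add[symmetric] by (simp add: algebra_simps)
    moreover have "exp (- 2 * a * T) = m4" unfolding m4_def by simp
    ultimately show ?thesis by (simp add: left_diff_distrib)
  qed
  have t2: "(1 - exp (2 * b * \<tau>)) * exp (- 4 * b * T) = m6 - m3*W"
  proof -
    have "exp (2 * b * \<tau>) * exp (- 4 * b * T) = m3*W"
      unfolding m3_def W_def L_def exp_add[symmetric] by (simp add: algebra_simps)
    moreover have "exp (- 4 * b * T) = m6" unfolding m6_def by simp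
    ultimately show ?thesis by (simp add: left_diff_distrib)
  qed
  have t3: "(1 - exp (a * \<tau>)) * exp (- (a + 2 * b) * T) = m5 - m2*W"
  proof -
    have "exp (a * \<tau>) * exp (- (a + 2 * b) * T) = m2*W"
      unfolding m2_def W_def L_def exp_add[symmetric] by (simp add: algebra_simps)
    moreover have "exp (- (a + 2 * b) * T) = m5" unfolding m5_def by simp
    ultimately show ?thesis by (simp add: left_diff_distrib)
  qed
  have "2 * (V1 + V2) = a/(a+2*b)*(1-W) + 2 * a * b\<^sup>2 / ((a - 2 * b)\<^sup>2 * (a - b))*(m4 - m1*W)
     + a\<^sup>2 / (a - 2 * b)\<^sup>2*(m6 - m3*W) - 16 * a * b\<^sup>2 / ((a - 2 * b)\<^sup>2 * (a + 2 * b))*(m5 - m2*W)"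
    unfolding VV c1 c2 c3 c4 ..
  also have "\<dots> = a / (a + 2 * b) * (1 - exp (- 2 * b * \<tau>))
    + 2 * a * b\<^sup>2 / ((a - 2 * b)\<^sup>2 * (a - b)) * (1 - exp (2 * (a - b) * \<tau>)) * exp (- 2 * a * T)
    + a\<^sup>2 / (a - 2 * b)\<^sup>2 * (1 - exp (2 * b * \<tau>)) * exp (- 4 * b * T)
    - 16 * a * b\<^sup>2 / ((a - 2 * b)\<^sup>2 * (a + 2 * b)) * (1 - exp (a * \<tau>)) * exp (- (a + 2 * b) * T)"
    unfolding w0 t1[symmetric] t2[symmetric] t3[symmetric] by (simp only: mult.assoc)
  finally show ?thesis unfolding G .
qed

theorem theorem9:
  fixes a b \<eta> T \<tau> :: real
  assumes "a > 0" "b > 0" "a \<noteq> 2 * b" "a \<noteq> b"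
    and "0 < \<eta>" "\<eta> \<le> 1" "T > 0" "0 < \<tau>" "\<tau> \<le> T"
  shows "visibility \<eta> a b T \<tau> * (p_det \<eta> a b T / \<eta>)\<^sup>2 * p_phph \<eta> a b T \<tau> =
    a / (a + 2 * b) * (1 - exp (- 2 * b * \<tau>))
    + 2 * a * b\<^sup>2 / ((a - 2 * b)\<^sup>2 * (a - b)) * (1 - exp (2 * (a - b) * \<tau>)) * exp (- 2 * a * T)
    + a\<^sup>2 / (a - 2 * b)\<^sup>2 * (1 - exp (2 * b * \<tau>)) * exp (- 4 * b * T)
    - 16 * a * b\<^sup>2 / ((a - 2 * b)\<^sup>2 * (a + 2 * b)) * (1 - exp (a * \<tau>)) * exp (- (a + 2 * b) * T)"
proof -
  define Q where "Q = (\<integral>s. indicator (Rset T \<tau>) s * (Gc a b (fst s) (fst s) * Gc a b (snd s) (snd s)) \<partial>lborel)"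
  define \<Gamma> where "\<Gamma> = (\<integral>s. indicator (Rset T \<tau>) s * (Gc a b (fst s) (snd s))\<^sup>2 \<partial>lborel)"
  have pd: "p_det \<eta> a b T > 0" using pdet_pos assms by simp
  have Qp: "Q > 0" unfolding Q_def using Q_pos assms by simp
  have ph: "(p_det \<eta> a b T)\<^sup>2 * p_phph \<eta> a b T \<tau> = \<eta>\<^sup>2 * Q"
    unfolding Q_def using phph_eq assms pd by simp
  have sm: "P_same \<eta> a b T \<tau> = \<eta>\<^sup>2 / 4 * (2 * Q - 2 * \<Gamma>)"
    unfolding Q_def \<Gamma>_def using same_eq assms by simp
  have df: "P_diff \<eta> a b T \<tau> = \<eta>\<^sup>2 * Q / 2"
    unfolding P_diff_def using ph by simp
  have l1: "(p_det \<eta> a b T / \<eta>)\<^sup>2 * p_phph \<eta> a b T \<tau> = Q"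
    using ph assms by (simp add: power_divide field_simps)
  have "visibility \<eta> a b T \<tau> * (p_det \<eta> a b T / \<eta>)\<^sup>2 * p_phph \<eta> a b T \<tau>
     = (1 - (\<eta>\<^sup>2 / 4 * (2 * Q - 2 * \<Gamma>)) / (\<eta>\<^sup>2 * Q / 2)) * Q"
    unfolding mult.assoc l1 visibility_def sm df ..
  also have "\<dots> = \<Gamma>" using Qp assms by (simp add: field_simps)
  finally show ?thesis unfolding \<Gamma>_def using Gamma_eq assms by simp
qed

end
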